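(* Let $\Delta$ be a quasi-tree on $[n]$ of dimension $d-1$, and let $\ell$ be a nonnegative integer with $\ell\leq d-1$. Let $I\subset S=K[x_1,\ldots,x_n]$ ($K$ a field) be the ideal generated by all monomials $x_F=\prod_{i\in F}x_i$ where $F$ ranges over the $(\ell+1)$-element subsets of $[n]$ with $F\notin\Delta$ (the facet ideal of $\overline{\mathrm{skel}_\Delta(\ell)}$). Then $I$ has linear quotients. In particular, $I$ has a linear resolution.
   Context: A simplicial complex on $[n]$ is a collection of subsets of $[n]$ containing all singletons and closed under taking subsets; facets are maximal faces. A facet $F$ is a leaf if either it is the only facet, or there is a facet $G\neq F$ with $H\cap F\subseteq G\cap F$ for every facet $H\neq F$. $\Delta$ is a quasi-tree if its facets can be labeled $F_1,\ldots,F_m$ so that each $F_i$ is a leaf of the complex generated by $F_1,\ldots,F_i$. $\mathrm{skel}_\Delta(\ell)$ is the complex whose facets are the $\ell$-dimensional faces of $\Delta$; for a pure $(e-1)$-dimensional complex $\Gamma$, $\bar\Gamma$ is generated by the $e$-subsets of $[n]$ not in $\Gamma$. A monomial ideal $I$ has linear quotients if its minimal monomial generators can be ordered $f_1,\ldots,f_m$ such that for every $i>1$ the colon ideal $(f_1,\ldots,f_{i-1}):f_i$ is generated by variables. A graded ideal generated in degree $q$ has a linear resolution if the $i$-th module of its minimal graded free resolution is generated in degree $q+i$ for all $i$. *)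

theory Defs
  imports Main "HOL-Library.Poly_Mapping"
begin

definition simplicial_complex :: "nat \<Rightarrow> nat set set \<Rightarrow> bool" where
  "simplicial_complex n \<Delta> \<longleftrightarrow>
     \<Delta> \<subseteq> Pow {1..n} \<and> (\<forall>i\<in>{1..n}. {i} \<in> \<Delta>) \<and>
     (\<forall>F\<in>\<Delta>. \<forall>G. G \<subseteq> F \<longrightarrow> G \<in> \<Delta>)"

definition facets :: "nat set set \<Rightarrow> nat set set" where
  "facets \<Delta> = {F \<in> \<Delta>. \<forall>G\<in>\<Delta>. F \<subseteq> G \<longrightarrow> G = F}"

definition is_leaf :: "nat set set \<Rightarrow> nat set \<Rightarrow> bool" where
  "is_leaf \<Delta> F \<longleftrightarrow> F \<in> facets \<Delta> \<and>
     (facets \<Delta> = {F} \<or>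
      (\<exists>G\<in>facets \<Delta>. G \<noteq> F \<and> (\<forall>H\<in>facets \<Delta>. H \<noteq> F \<longrightarrow> H \<inter> F \<subseteq> G \<inter> F)))"

definition generated_complex :: "nat set set \<Rightarrow> nat set set" where
  "generated_complex \<F> = {G. \<exists>F\<in>\<F>. G \<subseteq> F}"

definition quasi_tree :: "nat \<Rightarrow> nat set set \<Rightarrow> bool" where
  "quasi_tree n \<Delta> \<longleftrightarrow> simplicial_complex n \<Delta> \<and>
     (\<exists>Fs. distinct Fs \<and> set Fs = facets \<Delta> \<and>
        (\<forall>i<length Fs. is_leaf (generated_complex (set (take (Suc i) Fs))) (Fs ! i)))"

text \<open>Polynomials in variables indexed by nat: finitely supported maps from monomials
  (exponent vectors) to coefficients. The ring S is the subring of
  polynomials only involving the variables x_1..x_n.\<close>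
type_synonym 'k mpoly = "(nat \<Rightarrow>\<^sub>0 nat) \<Rightarrow>\<^sub>0 'k"

definition polyring :: "nat \<Rightarrow> 'k::field mpoly set" where
  "polyring n = {p :: 'k mpoly. \<forall>m\<in>Poly_Mapping.keys p. Poly_Mapping.keys (m :: nat \<Rightarrow>\<^sub>0 nat) \<subseteq> {1..n}}"

definition mon :: "(nat \<Rightarrow>\<^sub>0 nat) \<Rightarrow> 'k::field mpoly" where
  "mon m = Poly_Mapping.single m 1"

definition var :: "nat \<Rightarrow> 'k::field mpoly" where
  "var i = mon (Poly_Mapping.single i 1)"

definition monom_of_set :: "nat set \<Rightarrow> 'k::field mpoly" where
  "monom_of_set F = (\<Prod>i\<in>F. var i)"

definition ideal_gen :: "nat \<Rightarrow> 'k::field mpoly set \<Rightarrow> 'k mpoly set" where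
  "ideal_gen n G = {(\<Sum>g\<in>T. r g * g) | T r. finite T \<and> T \<subseteq> G \<and> (\<forall>g\<in>T. r g \<in> polyring n)}"

definition colon :: "nat \<Rightarrow> 'k::field mpoly set \<Rightarrow> 'k mpoly \<Rightarrow> 'k mpoly set" where
  "colon n I f = {p \<in> polyring n. p * f \<in> I}"

definition generated_by_variables :: "nat \<Rightarrow> 'k::field mpoly set \<Rightarrow> bool" where
  "generated_by_variables n J \<longleftrightarrow> (\<exists>V \<subseteq> {1..n}. J = ideal_gen n (var ` V))"

definition monomials_in :: "nat \<Rightarrow> 'k::field mpoly set \<Rightarrow> (nat \<Rightarrow>\<^sub>0 nat) set" where
  "monomials_in n I = {m. Poly_Mapping.keys m \<subseteq> {1..n} \<and> (mon m :: 'k mpoly) \<in> I}"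

definition min_monomial_gens :: "nat \<Rightarrow> 'k::field mpoly set \<Rightarrow> 'k mpoly set" where
  "min_monomial_gens n I = mon ` {m \<in> monomials_in n I.
      \<forall>m'\<in>monomials_in n I. (\<forall>i. Poly_Mapping.lookup m' i \<le> Poly_Mapping.lookup m i) \<longrightarrow> m' = m}"

definition has_linear_quotients :: "nat \<Rightarrow> 'k::field mpoly set \<Rightarrow> bool" where
  "has_linear_quotients n I \<longleftrightarrow>
     (\<exists>fs. distinct fs \<and> set fs = min_monomial_gens n I \<and>
        (\<forall>i. 0 < i \<and> i < length fs \<longrightarrow>
           generated_by_variables n (colon n (ideal_gen n (set (take i fs))) (fs ! i))))"

end

theory Submission
  imports Defs "HOL-Library.Product_Lexorder"
begin


definition sq :: "nat set \<Rightarrow> (nat \<Rightarrow>\<^sub>0 nat)" where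
  "sq A = (\<Sum>i\<in>A. Poly_Mapping.single i 1)"

lemma lookup_sq: "finite A \<Longrightarrow> Poly_Mapping.lookup (sq A) i = (if i \<in> A then 1 else 0)"
  unfolding sq_def by (induction A rule: finite_induct) (auto simp: lookup_add lookup_single when_def)

lemma keys_sq: "finite A \<Longrightarrow> Poly_Mapping.keys (sq A) = A"
  by (auto simp: in_keys_iff lookup_sq split: if_splits)

lemma monom_of_set_eq: "finite F \<Longrightarrow> (monom_of_set F :: 'k::field mpoly) = mon (sq F)"
proof (induction F rule: finite_induct)
  case empty
  then show ?case by (simp add: monom_of_set_def sq_def mon_def one_poly_mapping.abs_eq single.abs_eq)
next
  case (insert x F)
  then show ?case
    by (simp add: monom_of_set_def sq_def var_def mon_def mult_single)
qed

definition dvdm :: "(nat \<Rightarrow>\<^sub>0 nat) \<Rightarrow> (nat \<Rightarrow>\<^sub>0 nat) \<Rightarrow> bool" where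
  "dvdm g m \<longleftrightarrow> (\<forall>i. Poly_Mapping.lookup g i \<le> Poly_Mapping.lookup m i)"

lemma pm_expand: "(p :: 'a \<Rightarrow>\<^sub>0 'b::comm_monoid_add) = (\<Sum>m\<in>Poly_Mapping.keys p. Poly_Mapping.single m (Poly_Mapping.lookup p m))"
proof (rule poly_mapping_eqI)
  fix k
  have "Poly_Mapping.lookup (\<Sum>m\<in>Poly_Mapping.keys p. Poly_Mapping.single m (Poly_Mapping.lookup p m)) k
     = (\<Sum>m\<in>Poly_Mapping.keys p. (if m = k then Poly_Mapping.lookup p m else 0))"
    by (simp add: lookup_sum lookup_single when_def eq_commute)
  also have "\<dots> = Poly_Mapping.lookup p k"
    by (simp add: in_keys_iff)
  finally show "Poly_Mapping.lookup p k = Poly_Mapping.lookup (\<Sum>m\<in>Poly_Mapping.keys p. Poly_Mapping.single m (Poly_Mapping.lookup p m)) k" by simp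
qed

lemma mult_mon_expand: "(p :: 'k::field mpoly) * mon a = (\<Sum>m\<in>Poly_Mapping.keys p. Poly_Mapping.single (m + a) (Poly_Mapping.lookup p m))"
proof -
  have "p * mon a = (\<Sum>m\<in>Poly_Mapping.keys p. Poly_Mapping.single m (Poly_Mapping.lookup p m)) * mon a"
    using pm_expand by metis
  also have "\<dots> = (\<Sum>m\<in>Poly_Mapping.keys p. Poly_Mapping.single m (Poly_Mapping.lookup p m) * mon a)"
    by (simp add: sum_distrib_right)
  also have "\<dots> = (\<Sum>m\<in>Poly_Mapping.keys p. Poly_Mapping.single (m + a) (Poly_Mapping.lookup p m))"
    by (simp add: mon_def mult_single)
  finally show ?thesis .
qed

lemma lookup_mult_mon: "Poly_Mapping.lookup ((p :: 'k::field mpoly) * mon a) (m + a) = Poly_Mapping.lookup p m"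
proof -
  have "Poly_Mapping.lookup (p * mon a) (m + a) = (\<Sum>m'\<in>Poly_Mapping.keys p. (if m' = m then Poly_Mapping.lookup p m' else 0))"
    unfolding mult_mon_expand by (simp add: lookup_sum lookup_single when_def)
  also have "\<dots> = Poly_Mapping.lookup p m" by (simp add: in_keys_iff)
  finally show ?thesis .
qed

lemma keys_mult_mon: "Poly_Mapping.keys ((p :: 'k::field mpoly) * mon a) = (\<lambda>m. m + a) ` Poly_Mapping.keys p"
proof
  show "Poly_Mapping.keys (p * mon a) \<subseteq> (\<lambda>m. m + a) ` Poly_Mapping.keys p"
    using keys_mult[of p "mon a"] by (auto simp: mon_def)
  show "(\<lambda>m. m + a) ` Poly_Mapping.keys p \<subseteq> Poly_Mapping.keys (p * mon a)"
    by (auto simp: in_keys_iff lookup_mult_mon)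
qed

lemma keys_add_sub: "Poly_Mapping.keys ((f::nat \<Rightarrow>\<^sub>0 nat) + g) \<subseteq> S \<longleftrightarrow> Poly_Mapping.keys f \<subseteq> S \<and> Poly_Mapping.keys g \<subseteq> S"
proof
  assume "Poly_Mapping.keys (f + g) \<subseteq> S"
  moreover have "Poly_Mapping.keys f \<subseteq> Poly_Mapping.keys (f + g)" "Poly_Mapping.keys g \<subseteq> Poly_Mapping.keys (f + g)"
    by (auto simp: in_keys_iff lookup_add)
  ultimately show "Poly_Mapping.keys f \<subseteq> S \<and> Poly_Mapping.keys g \<subseteq> S" by blast
next
  assume "Poly_Mapping.keys f \<subseteq> S \<and> Poly_Mapping.keys g \<subseteq> S"
  then show "Poly_Mapping.keys (f + g) \<subseteq> S" using keys_add[of f g] by blast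
qed



lemma polyring_iff: "p \<in> polyring n \<longleftrightarrow> (\<forall>m\<in>Poly_Mapping.keys p. Poly_Mapping.keys m \<subseteq> {1..n})"
  by (simp add: polyring_def)

lemma keys_minus_sub: "Poly_Mapping.keys ((m::nat \<Rightarrow>\<^sub>0 nat) - g) \<subseteq> Poly_Mapping.keys m"
  by (auto simp: in_keys_iff lookup_minus)

lemma dvdm_add_minus: "dvdm g m \<Longrightarrow> (m - g) + g = m"
  by (rule poly_mapping_eqI) (auto simp: dvdm_def lookup_add lookup_minus)

lemma ideal_mono_iff:
  assumes G: "\<forall>g\<in>Gs. Poly_Mapping.keys g \<subseteq> {1..n}"
  shows "(p :: 'k::field mpoly) \<in> ideal_gen n (mon ` Gs) \<longleftrightarrow>
         p \<in> polyring n \<and> (\<forall>m\<in>Poly_Mapping.keys p. \<exists>g\<in>Gs. dvdm g m)"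
proof
  assume "p \<in> ideal_gen n (mon ` Gs)"
  then obtain T r where p: "p = (\<Sum>g\<in>T. r g * g)" and T: "finite T" "T \<subseteq> mon ` Gs"
    and r: "\<forall>g\<in>T. r g \<in> polyring n"
    unfolding ideal_gen_def by blast
  have key: "\<forall>m\<in>Poly_Mapping.keys p. Poly_Mapping.keys m \<subseteq> {1..n} \<and> (\<exists>g\<in>Gs. dvdm g m)"
  proof
    fix m assume "m \<in> Poly_Mapping.keys p"
    then obtain t where t: "t \<in> T" and mt: "m \<in> Poly_Mapping.keys (r t * t)"
      using keys_sum[of "\<lambda>g. r g * g" T] p by blast
    from t T obtain g0 where g0: "g0 \<in> Gs" "t = mon g0" by blast
    from mt g0 have "m \<in> (\<lambda>m. m + g0) ` Poly_Mapping.keys (r t)"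
      using keys_mult_mon by blast
    then obtain a where a: "a \<in> Poly_Mapping.keys (r t)" "m = a + g0" by blast
    have "Poly_Mapping.keys a \<subseteq> {1..n}" using r t a(1) by (auto simp: polyring_iff)
    moreover have "Poly_Mapping.keys g0 \<subseteq> {1..n}" using G g0 by blast
    ultimately have "Poly_Mapping.keys m \<subseteq> {1..n}" using a(2) keys_add_sub by blast
    moreover have "dvdm g0 m" using a(2) by (simp add: dvdm_def lookup_add)
    ultimately show "Poly_Mapping.keys m \<subseteq> {1..n} \<and> (\<exists>g\<in>Gs. dvdm g m)" using g0 by blast
  qed
  then show "p \<in> polyring n \<and> (\<forall>m\<in>Poly_Mapping.keys p. \<exists>g\<in>Gs. dvdm g m)"
    by (auto simp: polyring_iff)
next
  assume A: "p \<in> polyring n \<and> (\<forall>m\<in>Poly_Mapping.keys p. \<exists>g\<in>Gs. dvdm g m)"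
  define gs where "gs m = (SOME g. g \<in> Gs \<and> dvdm g m)" for m
  have gs: "gs m \<in> Gs \<and> dvdm (gs m) m" if "m \<in> Poly_Mapping.keys p" for m
    unfolding gs_def using A that by (metis (mono_tags, lifting) someI_ex)
  define h where "h m = (mon (gs m) :: 'k mpoly)" for m
  define T where "T = h ` Poly_Mapping.keys p"
  define r where "r t = (\<Sum>m\<in>{x \<in> Poly_Mapping.keys p. h x = t}. Poly_Mapping.single (m - gs m) (Poly_Mapping.lookup p m))" for t
  have "(\<Sum>t\<in>T. r t * t) = (\<Sum>t\<in>T. \<Sum>m\<in>{x \<in> Poly_Mapping.keys p. h x = t}. Poly_Mapping.single m (Poly_Mapping.lookup p m))"
  proof (rule sum.cong[OF refl])
    fix t assume "t \<in> T"
    have "r t * t = (\<Sum>m\<in>{x \<in> Poly_Mapping.keys p. h x = t}. Poly_Mapping.single (m - gs m) (Poly_Mapping.lookup p m) * t)"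
      unfolding r_def by (simp add: sum_distrib_right)
    also have "\<dots> = (\<Sum>m\<in>{x \<in> Poly_Mapping.keys p. h x = t}. Poly_Mapping.single m (Poly_Mapping.lookup p m))"
    proof (rule sum.cong[OF refl])
      fix m assume "m \<in> {x \<in> Poly_Mapping.keys p. h x = t}"
      then have "m \<in> Poly_Mapping.keys p" "t = mon (gs m)" by (auto simp: h_def)
      then show "Poly_Mapping.single (m - gs m) (Poly_Mapping.lookup p m) * t = Poly_Mapping.single m (Poly_Mapping.lookup p m)"
        using gs[of m] dvdm_add_minus by (simp add: mon_def mult_single)
    qed
    finally show "r t * t = (\<Sum>m\<in>{x \<in> Poly_Mapping.keys p. h x = t}. Poly_Mapping.single m (Poly_Mapping.lookup p m))" .
  qed
  also have "\<dots> = (\<Sum>m\<in>Poly_Mapping.keys p. Poly_Mapping.single m (Poly_Mapping.lookup p m))"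
    by (rule sum.group) (auto simp: T_def)
  also have "\<dots> = p" using pm_expand by metis
  finally have sum: "p = (\<Sum>t\<in>T. r t * t)" by simp
  have fin: "finite T" by (simp add: T_def)
  have sub: "T \<subseteq> mon ` Gs" using gs by (auto simp: T_def h_def)
  have rp: "\<forall>t\<in>T. r t \<in> polyring n"
  proof
    fix t assume "t \<in> T"
    show "r t \<in> polyring n"
      unfolding polyring_iff
    proof
      fix k assume "k \<in> Poly_Mapping.keys (r t)"
      then obtain m where m: "m \<in> Poly_Mapping.keys p" "k \<in> Poly_Mapping.keys (Poly_Mapping.single (m - gs m) (Poly_Mapping.lookup p m) :: 'k mpoly)"
        using keys_sum unfolding r_def by fastforce
      then have "k = m - gs m" by (auto split: if_splits)
      then have "Poly_Mapping.keys k \<subseteq> Poly_Mapping.keys m" using keys_minus_sub by blast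
      then show "Poly_Mapping.keys k \<subseteq> {1..n}" using A m(1) by (auto simp: polyring_iff)
    qed
  qed
  show "p \<in> ideal_gen n (mon ` Gs)"
    unfolding ideal_gen_def using sum fin sub rp by blast
qed



lemma keys_mon: "Poly_Mapping.keys (mon m :: 'k::field mpoly) = {m}"
  by (simp add: mon_def)

lemma dvdm_single: "dvdm (Poly_Mapping.single v 1) m \<longleftrightarrow> 1 \<le> Poly_Mapping.lookup m v"
  by (auto simp: dvdm_def lookup_single when_def)

lemma colon_lemma:
  assumes G: "\<forall>g\<in>G. Poly_Mapping.keys g \<subseteq> {1..n}"
    and a: "Poly_Mapping.keys a \<subseteq> {1..n}"
    and V: "V \<subseteq> {1..n}"
    and H: "\<And>m. Poly_Mapping.keys m \<subseteq> {1..n} \<Longrightarrow> (\<exists>g\<in>G. dvdm g (m + a)) \<longleftrightarrow> (\<exists>v\<in>V. 1 \<le> Poly_Mapping.lookup m v)"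
  shows "colon n (ideal_gen n (mon ` G)) (mon a :: 'k::field mpoly) = ideal_gen n (var ` V)"
proof -
  have vV: "var ` V = (mon ` ((\<lambda>v. Poly_Mapping.single v 1) ` V) :: 'k mpoly set)"
    by (auto simp: var_def)
  have G': "\<forall>g\<in>(\<lambda>v. Poly_Mapping.single v 1) ` V. Poly_Mapping.keys g \<subseteq> {1..n}"
    using V by auto
  show ?thesis
  proof (rule set_eqI)
    fix p :: "'k mpoly"
    have "p \<in> colon n (ideal_gen n (mon ` G)) (mon a) \<longleftrightarrow>
      p \<in> polyring n \<and> p * mon a \<in> polyring n \<and> (\<forall>m\<in>Poly_Mapping.keys (p * mon a). \<exists>g\<in>G. dvdm g m)"
      unfolding colon_def using ideal_mono_iff[OF G] by blast
    also have "\<dots> \<longleftrightarrow> p \<in> polyring n \<and> (\<forall>m\<in>Poly_Mapping.keys p. \<exists>g\<in>G. dvdm g (m + a))"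
    proof -
      have "p \<in> polyring n \<Longrightarrow> p * mon a \<in> polyring n"
        using a by (auto simp: polyring_iff keys_mult_mon keys_add_sub)
      then show ?thesis by (auto simp: keys_mult_mon)
    qed
    also have "\<dots> \<longleftrightarrow> p \<in> polyring n \<and> (\<forall>m\<in>Poly_Mapping.keys p. \<exists>v\<in>V. dvdm (Poly_Mapping.single v 1) m)"
      unfolding dvdm_single using H by (auto simp: polyring_iff)
    also have "\<dots> \<longleftrightarrow> p \<in> ideal_gen n (var ` V)"
      unfolding vV ideal_mono_iff[OF G'] by blast
    finally show "p \<in> colon n (ideal_gen n (mon ` G)) (mon a) \<longleftrightarrow> p \<in> ideal_gen n (var ` V)" .
  qed
qed

lemma dvdm_sq: "finite B \<Longrightarrow> dvdm (sq B) m \<longleftrightarrow> (\<forall>x\<in>B. 1 \<le> Poly_Mapping.lookup m x)"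
  by (auto simp: dvdm_def lookup_sq)

lemma mon_inj: "mon a = (mon b :: 'k::field mpoly) \<longleftrightarrow> a = b"
  by (metis keys_mon singleton_inject)

lemma min_gens_lemma:
  assumes N: "\<forall>A\<in>N. A \<subseteq> {1..n} \<and> card A = e"
  shows "min_monomial_gens n (ideal_gen n (mon ` sq ` N)) = (mon ` sq ` N :: 'k::field mpoly set)"
proof -
  have finN: "\<forall>A\<in>N. finite A" using N finite_subset by blast
  have G: "\<forall>g\<in>sq ` N. Poly_Mapping.keys g \<subseteq> {1..n}" using N finN by (auto simp: keys_sq)
  have MI: "monomials_in n (ideal_gen n (mon ` sq ` N) :: 'k mpoly set) =
     {m. Poly_Mapping.keys m \<subseteq> {1..n} \<and> (\<exists>A\<in>N. dvdm (sq A) m)}"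
    unfolding monomials_in_def using ideal_mono_iff[OF G, where 'k='k]
    by (auto simp: polyring_iff keys_mon)
  have "{m \<in> monomials_in n (ideal_gen n (mon ` sq ` N) :: 'k mpoly set).
      \<forall>m'\<in>monomials_in n (ideal_gen n (mon ` sq ` N) :: 'k mpoly set).
        (\<forall>i. Poly_Mapping.lookup m' i \<le> Poly_Mapping.lookup m i) \<longrightarrow> m' = m} = sq ` N"
    (is "?L = _")
  proof
    show "?L \<subseteq> sq ` N"
    proof
      fix m assume m: "m \<in> ?L"
      then obtain A where A: "A \<in> N" "dvdm (sq A) m" unfolding MI by blast
      have "sq A \<in> monomials_in n (ideal_gen n (mon ` sq ` N) :: 'k mpoly set)"
        unfolding MI using A G by (auto simp: dvdm_def)
      then have "sq A = m" using m A(2) by (auto simp: dvdm_def)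
      then show "m \<in> sq ` N" using A by blast
    qed
  next
    show "sq ` N \<subseteq> ?L"
    proof
      fix m assume "m \<in> sq ` N"
      then obtain A where A: "A \<in> N" "m = sq A" by blast
      have inMI: "m \<in> monomials_in n (ideal_gen n (mon ` sq ` N) :: 'k mpoly set)"
        unfolding MI using A G by (auto simp: dvdm_def)
      moreover have "m' = m" if m': "m' \<in> monomials_in n (ideal_gen n (mon ` sq ` N) :: 'k mpoly set)"
        and le: "\<forall>i. Poly_Mapping.lookup m' i \<le> Poly_Mapping.lookup m i" for m'
      proof -
        from m' obtain B where B: "B \<in> N" "dvdm (sq B) m'" unfolding MI by blast
        have fA: "finite A" "finite B" using finN A B by auto
        have "B \<subseteq> A"
        proof
          fix x assume "x \<in> B"
          then have "1 \<le> Poly_Mapping.lookup m' x" using B fA dvdm_sq by blast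
          then have "1 \<le> Poly_Mapping.lookup (sq A) x" using le A(2) order_trans by metis
          then show "x \<in> A" using fA by (simp add: lookup_sq split: if_splits)
        qed
        moreover have "card B = card A" using N A B by auto
        ultimately have "B = A" using fA card_subset_eq by blast
        show "m' = m"
        proof (rule poly_mapping_eqI)
          fix i
          have "Poly_Mapping.lookup (sq A) i \<le> Poly_Mapping.lookup m' i"
            using B(2) \<open>B = A\<close> by (simp add: dvdm_def)
          then show "Poly_Mapping.lookup m' i = Poly_Mapping.lookup m i" using le A(2) by (metis order_antisym)
        qed
      qed
      ultimately show "m \<in> ?L" by blast
    qed
  qed
  then show ?thesis unfolding min_monomial_gens_def by simp
qed



lemma sort_order_lemma:
  fixes key :: "'a \<Rightarrow> 'b::linorder"
  assumes fin: "finite S"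
    and ex: "\<And>A B. A \<in> S \<Longrightarrow> B \<in> S \<Longrightarrow> A \<noteq> B \<Longrightarrow> key B \<le> key A \<Longrightarrow> \<exists>C\<in>S. key C < key A \<and> Q A B C"
  shows "\<exists>As. distinct As \<and> set As = S \<and> (\<forall>i<length As. \<forall>j<i. \<exists>k<i. Q (As!i) (As!j) (As!k))"
proof -
  obtain xs where xs: "set xs = S" "distinct xs" using finite_distinct_list[OF fin] by blast
  define As where "As = sort_key key xs"
  have d: "distinct As" and s: "set As = S" using xs by (auto simp: As_def)
  have so: "sorted (map key As)" by (simp add: As_def)
  have mono: "key (As!j) \<le> key (As!i)" if "j \<le> i" "i < length As" for i j
    using sorted_nth_mono[OF so, of j i] that by simp
  have "\<forall>i<length As. \<forall>j<i. \<exists>k<i. Q (As!i) (As!j) (As!k)"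
  proof (intro allI impI)
    fix i j assume i: "i < length As" and j: "j < i"
    have ne: "As!i \<noteq> As!j" using d i j by (simp add: nth_eq_iff_index_eq)
    have inS: "As!i \<in> S" "As!j \<in> S" using i j s by auto
    obtain C where C: "C \<in> S" "key C < key (As!i)" "Q (As!i) (As!j) C"
      using ex[OF inS ne] mono[of j i] j i by auto
    obtain k where k: "k < length As" "As!k = C" using C(1) s by (metis in_set_conv_nth)
    have "k < i"
    proof (rule ccontr)
      assume "\<not> k < i"
      then have "key (As!i) \<le> key (As!k)" using mono[of i k] k by simp
      then show False using C(2) k by simp
    qed
    then show "\<exists>k<i. Q (As!i) (As!j) (As!k)" using C k by blast
  qed
  then show ?thesis using d s by blast
qed

lemma sum_swap_lemma:
  fixes \<rho> :: "'a \<Rightarrow> nat"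
  assumes fA: "finite A" and fB: "finite B" and c: "card A = card B" and ne: "A \<noteq> B"
    and inj: "inj_on \<rho> (A \<union> B)" and le: "sum \<rho> B \<le> sum \<rho> A"
  shows "\<exists>u\<in>B - A. \<exists>w\<in>A - B. \<rho> u < \<rho> w"
proof (rule ccontr)
  assume H: "\<not> ?thesis"
  have lt: "\<rho> w < \<rho> u" if "u \<in> B - A" "w \<in> A - B" for u w
  proof -
    have "\<rho> w \<le> \<rho> u" using H that by force
    moreover have "\<rho> w \<noteq> \<rho> u" using inj that by (metis DiffD1 DiffD2 UnI1 UnI2 inj_on_eq_iff)
    ultimately show ?thesis by simp
  qed
  have cAB: "card (A - B) = card (B - A)"
  proof -
    have "card A = card (A \<inter> B) + card (A - B)" using fA
      by (metis card_Int_Diff)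
    moreover have "card B = card (A \<inter> B) + card (B - A)" using fB
      by (metis card_Int_Diff inf_commute)
    ultimately show ?thesis using c by simp
  qed
  have BA: "B - A \<noteq> {}"
  proof
    assume "B - A = {}"
    then have "B \<subseteq> A" by blast
    then show False using card_subset_eq[OF fA] c ne by metis
  qed
  define \<mu> where "\<mu> = Min (\<rho> ` (B - A))"
  have mu: "\<mu> \<le> \<rho> u" if "u \<in> B - A" for u using fB that by (simp add: \<mu>_def)
  have mu2: "\<rho> w < \<mu>" if "w \<in> A - B" for w
  proof -
    have "\<mu> \<in> \<rho> ` (B - A)" using BA fB by (simp add: \<mu>_def)
    then obtain u where "u \<in> B - A" "\<mu> = \<rho> u" by blast
    then show ?thesis using lt that by simp
  qed
  have k0: "card (B - A) > 0" using BA fB by auto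
  have s1: "card (B - A) * \<mu> \<le> sum \<rho> (B - A)" using sum_bounded_below[of "B - A" \<mu> \<rho>] mu by simp
  have s2: "sum \<rho> (A - B) \<le> card (A - B) * (\<mu> - 1)"
    using sum_bounded_above[of "A - B" \<rho> "\<mu> - 1"] mu2 by fastforce
  have "\<mu> > 0" using mu2 BA cAB k0 by (metis card.empty ex_in_conv gr_zeroI not_less0 less_nat_zero_code)
  then have s3: "sum \<rho> (A - B) < sum \<rho> (B - A)"
    using s1 s2 cAB k0 by (metis diff_less less_le_trans mult_less_cancel1 le_less_trans zero_less_one)
  have "sum \<rho> A = sum \<rho> (A \<inter> B) + sum \<rho> (A - B)" using fA by (metis sum.Int_Diff)
  moreover have "sum \<rho> B = sum \<rho> (A \<inter> B) + sum \<rho> (B - A)" using fB by (metis sum.Int_Diff inf_commute)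
  ultimately show False using s3 le by simp
qed



locale pe_setup =
  fixes V :: "nat set" and \<Delta> :: "nat set set" and \<rho> :: "nat \<Rightarrow> nat" and Fc :: "nat \<Rightarrow> nat set" and e :: nat
  assumes finV: "finite V"
    and down: "\<And>F G. F \<in> \<Delta> \<Longrightarrow> G \<subseteq> F \<Longrightarrow> G \<in> \<Delta>"
    and emp: "{} \<in> \<Delta>"
    and sing: "\<And>i. i \<in> V \<Longrightarrow> {i} \<in> \<Delta>"
    and inj: "inj_on \<rho> V"
    and Fc_face: "\<And>u. u \<in> V \<Longrightarrow> Fc u \<in> \<Delta>"
    and Fc_max: "\<And>u C. u \<in> V \<Longrightarrow> C \<in> \<Delta> \<Longrightarrow> u \<in> C \<Longrightarrow> C \<subseteq> V \<Longrightarrow> (\<forall>x\<in>C. \<rho> x \<le> \<rho> u) \<Longrightarrow> C \<subseteq> Fc u"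
begin

definition Nf :: "nat set set" where
  "Nf = {A. A \<subseteq> V \<and> card A = e \<and> A \<notin> \<Delta>}"

definition mx :: "nat set \<Rightarrow> nat" where
  "mx A = (SOME x. x \<in> A \<and> (\<forall>y\<in>A. \<rho> y \<le> \<rho> x))"

definition key :: "nat set \<Rightarrow> nat \<times> nat \<times> nat" where
  "key A = (Max (\<rho> ` V) - \<rho> (mx A), card (A \<inter> Fc (mx A)), sum \<rho> A)"

lemma mx_prop:
  assumes "A \<subseteq> V" "A \<noteq> {}"
  shows "mx A \<in> A \<and> (\<forall>y\<in>A. \<rho> y \<le> \<rho> (mx A))"
proof -
  have fA: "finite A" using assms finV finite_subset by blast
  have "Max (\<rho> ` A) \<in> \<rho> ` A" using fA assms by simp
  then obtain x where x: "x \<in> A" "\<rho> x = Max (\<rho> ` A)" by auto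
  have "\<forall>y\<in>A. \<rho> y \<le> \<rho> x" using x fA by simp
  then have "\<exists>x. x \<in> A \<and> (\<forall>y\<in>A. \<rho> y \<le> \<rho> x)" using x by blast
  then show ?thesis unfolding mx_def by (rule someI_ex)
qed

lemma mx_eq:
  assumes "A \<subseteq> V" "x \<in> A" "\<forall>y\<in>A. \<rho> y \<le> \<rho> x"
  shows "mx A = x"
proof -
  have m: "mx A \<in> A" "\<rho> x \<le> \<rho> (mx A)" using mx_prop[of A] assms by auto
  then have "\<rho> (mx A) = \<rho> x" using assms by (meson le_antisym)
  then show ?thesis using inj m(1) assms by (meson inj_on_eq_iff subsetD)
qed

lemma rho_le_Max: "u \<in> V \<Longrightarrow> \<rho> u \<le> Max (\<rho> ` V)"
  using finV by simp

lemma Nf_card2: "A \<in> Nf \<Longrightarrow> 2 \<le> card A"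
proof (rule ccontr)
  assume A: "A \<in> Nf" "\<not> 2 \<le> card A"
  then have "card A = 0 \<or> card A = 1" by linarith
  moreover have fA: "finite A" using A finV finite_subset by (auto simp: Nf_def)
  ultimately have "A = {} \<or> (\<exists>i. A = {i})" by (auto simp: card_1_singleton_iff)
  then show False using A emp sing by (auto simp: Nf_def)
qed

lemma nonface_out: "A \<notin> \<Delta> \<Longrightarrow> F \<in> \<Delta> \<Longrightarrow> \<exists>x\<in>A. x \<notin> F"
  using down by blast

lemma swap_in:
  assumes A: "A \<in> Nf" and u: "u \<in> V" "u \<notin> A" and w: "w \<in> A"
    and nf: "insert u (A - {w}) \<notin> \<Delta>"
  shows "insert u (A - {w}) \<in> Nf" "insert u (A - {w}) - A = {u}"
proof -
  have fA: "finite A" using A finV finite_subset by (auto simp: Nf_def)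
  have "card A > 0" using fA w card_gt_0_iff by blast
  then have "card (insert u (A - {w})) = card A"
    using fA u w by (simp add: card_Diff_singleton)
  then show "insert u (A - {w}) \<in> Nf" using A u nf by (auto simp: Nf_def)
  show "insert u (A - {w}) - A = {u}" using u by auto
qed

lemma sum_swap: "finite A \<Longrightarrow> w \<in> A \<Longrightarrow> u \<notin> A \<Longrightarrow> \<rho> u < \<rho> w \<Longrightarrow> sum \<rho> (insert u (A - {w})) < sum \<rho> A"
  by (simp add: sum.remove[of A w])

lemma exchange:
  assumes A: "A \<in> Nf" and B: "B \<in> Nf" and ne: "A \<noteq> B" and le: "key B \<le> key A"
  shows "\<exists>C\<in>Nf. key C < key A \<and> (\<exists>v. C - A = {v} \<and> v \<in> B)"
proof -
  have AV: "A \<subseteq> V" "A \<notin> \<Delta>" "card A = e" and BV: "B \<subseteq> V" "B \<notin> \<Delta>" "card B = e" using A B by (auto simp: Nf_def)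
  have fA: "finite A" and fB: "finite B" using AV BV finV finite_subset by auto
  have A2: "2 \<le> card A" using Nf_card2 A by blast
  have Ane: "A \<noteq> {}" and Bne: "B \<noteq> {}" using A2 AV BV by auto
  define m where "m = mx A"
  define mB where "mB = mx B"
  have m: "m \<in> A" "\<forall>y\<in>A. \<rho> y \<le> \<rho> m" using mx_prop[OF AV(1) Ane] by (auto simp: m_def)
  have mB: "mB \<in> B" "\<forall>y\<in>B. \<rho> y \<le> \<rho> mB" using mx_prop[OF BV(1) Bne] by (auto simp: mB_def)
  have mV: "m \<in> V" "mB \<in> V" using m mB AV BV by auto
  have keyA: "key A = (Max (\<rho> ` V) - \<rho> m, card (A \<inter> Fc m), sum \<rho> A)" by (simp add: key_def m_def)
  have keyB: "key B = (Max (\<rho> ` V) - \<rho> mB, card (B \<inter> Fc mB), sum \<rho> B)" by (simp add: key_def mB_def)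
  have le1: "\<rho> m \<le> \<rho> mB"
    using le rho_le_Max[OF mV(1)] rho_le_Max[OF mV(2)] unfolding keyA keyB by auto
  show ?thesis
  proof (cases "\<rho> m < \<rho> mB")
    case True
    define u where "u = mB"
    have uA: "u \<notin> A" using True m u_def by force
    define F where "F = Fc u"
    obtain x where x: "x \<in> A" "x \<notin> F" using nonface_out[OF AV(2) Fc_face[OF mV(2)]] F_def u_def by blast
    obtain w where w: "w \<in> A" "w \<noteq> x"
    proof -
      have "card (A - {x}) \<ge> 1" using A2 x fA by (simp add: card_Diff_singleton)
      then have "A - {x} \<noteq> {}" by (metis card.empty not_one_le_zero)
      then show ?thesis using that by blast
    qed
    define C where "C = insert u (A - {w})"
    have Cle: "\<forall>y\<in>C. \<rho> y \<le> \<rho> u" using m True u_def by (auto simp: C_def)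
    have CV: "C \<subseteq> V" using AV mV u_def by (auto simp: C_def)
    have Cnf: "C \<notin> \<Delta>"
    proof
      assume "C \<in> \<Delta>"
      then have "C \<subseteq> F" using Fc_max[OF mV(2), of C] Cle CV u_def F_def by (auto simp: C_def)
      then show False using x w by (auto simp: C_def)
    qed
    have CN: "C \<in> Nf" "C - A = {u}" using swap_in[OF A _ uA w(1)] Cnf mV u_def by (auto simp: C_def)
    have "mx C = u" using mx_eq[OF CV _ Cle] by (simp add: C_def)
    moreover have "Max (\<rho> ` V) - \<rho> mB < Max (\<rho> ` V) - \<rho> m" using True rho_le_Max[OF mV(2)] by linarith
    ultimately have "key C < key A" unfolding keyA using u_def by (simp add: key_def)
    then show ?thesis using CN u_def mB by blast
  next
    case False
    then have "\<rho> m = \<rho> mB" using le1 by simp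
    then have mm: "mB = m" using inj mV by (metis inj_on_eq_iff)
    define F where "F = Fc m"
    have mF: "m \<in> F" using Fc_max[OF mV(1) sing[OF mV(1)]] mV by (auto simp: F_def)
    have mB': "m \<in> B" using mB mm by simp
    have le2: "(card (B \<inter> F), sum \<rho> B) \<le> (card (A \<inter> F), sum \<rho> A)"
      using le unfolding keyA keyB mm F_def by simp
    \<comment> \<open>generic: swapping w by u with rho u < rho m keeps the max\<close>
    have gen: "\<exists>C\<in>Nf. key C < key A \<and> (\<exists>v. C - A = {v} \<and> v \<in> B)"
      if u: "u \<in> B - A" and w: "w \<in> A" "w \<noteq> m" and out: "\<exists>x\<in>insert u (A - {w}). x \<notin> F"
        and kl: "(card (insert u (A - {w}) \<inter> F), sum \<rho> (insert u (A - {w}))) < (card (A \<inter> F), sum \<rho> A)"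
      for u w
    proof -
      define C where "C = insert u (A - {w})"
      have uV: "u \<in> V" using u BV by auto
      have Cle: "\<forall>y\<in>C. \<rho> y \<le> \<rho> m" using m mB mm u by (auto simp: C_def)
      have CV: "C \<subseteq> V" using AV uV by (auto simp: C_def)
      have mC: "m \<in> C" using m w by (auto simp: C_def)
      have Cnf: "C \<notin> \<Delta>"
      proof
        assume "C \<in> \<Delta>"
        then have "C \<subseteq> F" using Fc_max[OF mV(1) _ mC CV Cle] by (simp add: F_def)
        then show False using out by (auto simp: C_def)
      qed
      have CN: "C \<in> Nf" "C - A = {u}" using swap_in[OF A uV _ w(1)] Cnf u by (auto simp: C_def)
      have "mx C = m" using mx_eq[OF CV mC Cle] .
      then have "key C < key A" unfolding keyA using kl by (simp add: key_def C_def F_def)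
      then show ?thesis using CN u by blast
    qed
    have fAF: "finite (A \<inter> F)" using fA by simp
    show ?thesis
    proof (cases "(\<exists>u\<in>B - A. u \<notin> F) \<and> (\<exists>w\<in>A \<inter> F. w \<noteq> m)")
      case True
      then obtain u w where u: "u \<in> B - A" "u \<notin> F" and w: "w \<in> A \<inter> F" "w \<noteq> m" by blast
      have "insert u (A - {w}) \<inter> F = (A \<inter> F) - {w}" using u w by auto
      moreover have "card ((A \<inter> F) - {w}) < card (A \<inter> F)"
        using w fAF by (meson card_Diff1_less)
      ultimately have "card (insert u (A - {w}) \<inter> F) < card (A \<inter> F)" by simp
      moreover have "sum \<rho> (insert u (A - {w})) \<le> sum \<rho> A \<or> True" by simp
      ultimately have kl: "(card (insert u (A - {w}) \<inter> F), sum \<rho> (insert u (A - {w}))) < (card (A \<inter> F), sum \<rho> A)"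
        by simp
      have out: "\<exists>y\<in>insert u (A - {w}). y \<notin> F" using u by blast
      have wA: "w \<in> A" using w by blast
      show ?thesis using gen[OF u(1) wA w(2) out kl] .
    next
      case False
      have "card (B - A) = card (A - B)"
      proof -
        have "card A = card (A \<inter> B) + card (A - B)" using card_Int_Diff[OF fA, of B] by simp
        moreover have "card B = card (A \<inter> B) + card (B - A)" using card_Int_Diff[OF fB, of A] by (simp add: Int_commute)
        ultimately show ?thesis using AV BV by simp
      qed
      have cAB: "card A = card B" using AV BV by simp
      have injAB: "inj_on \<rho> (A \<union> B)" using inj_on_subset[OF inj, of "A \<union> B"] AV(1) BV(1) by blast
      show ?thesis
      proof (cases "\<exists>w\<in>A \<inter> F. w \<noteq> m")
        case False
        then have AF: "A \<inter> F = {m}" using m(1) mF by blast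
        have BF: "B \<inter> F = {m}"
        proof -
          have "card (B \<inter> F) \<le> 1" using le2 AF by auto
          moreover have "m \<in> B \<inter> F" using mB' mF by simp
          moreover have "finite (B \<inter> F)" using fB by simp
          ultimately show ?thesis using card_le_Suc0_iff_eq[of "B \<inter> F"] by auto
        qed
        have "sum \<rho> B \<le> sum \<rho> A" using le2 AF BF by auto
        then obtain u w where u: "u \<in> B - A" and w: "w \<in> A - B" and uw: "\<rho> u < \<rho> w"
          using sum_swap_lemma[OF fA fB cAB ne injAB] by blast
        have uF: "u \<notin> F" using u BF m by auto
        have wm: "w \<noteq> m" using w mB' by auto
        have CF: "insert u (A - {w}) \<inter> F = {m}" using AF uF wm m mF by auto
        have "sum \<rho> (insert u (A - {w})) < sum \<rho> A" using sum_swap fA w u uw by auto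
        then have kl: "(card (insert u (A - {w}) \<inter> F), sum \<rho> (insert u (A - {w}))) < (card (A \<inter> F), sum \<rho> A)"
          using CF AF by simp
        have out: "\<exists>y\<in>insert u (A - {w}). y \<notin> F" using uF by blast
        have wA: "w \<in> A" using w by blast
        show ?thesis using gen[OF u wA wm out kl] .
      next
        case True
        with \<open>\<not> ((\<exists>u\<in>B - A. u \<notin> F) \<and> (\<exists>w\<in>A \<inter> F. w \<noteq> m))\<close>
        have BAF: "B - A \<subseteq> F" by blast
        have c1: "card (B \<inter> F) = card (A \<inter> B \<inter> F) + card (B - A)"
        proof -
          have "B \<inter> F = (A \<inter> B \<inter> F) \<union> (B - A)" using BAF by auto
          moreover have "(A \<inter> B \<inter> F) \<inter> (B - A) = {}" by auto
          moreover have "finite (A \<inter> B \<inter> F)" "finite (B - A)" using fB by auto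
          ultimately show ?thesis by (simp add: card_Un_disjoint)
        qed
        have c2: "card (A \<inter> F) = card (A \<inter> B \<inter> F) + card ((A - B) \<inter> F)"
        proof -
          have "A \<inter> F = (A \<inter> B \<inter> F) \<union> ((A - B) \<inter> F)" by auto
          moreover have "(A \<inter> B \<inter> F) \<inter> ((A - B) \<inter> F) = {}" by auto
          moreover have "finite (A \<inter> B \<inter> F)" "finite ((A - B) \<inter> F)" using fA by auto
          ultimately show ?thesis by (simp add: card_Un_disjoint)
        qed
        have "card (B \<inter> F) \<le> card (A \<inter> F)" using le2 by auto
        then have "card (A - B) \<le> card ((A - B) \<inter> F)" using c1 c2 \<open>card (B - A) = card (A - B)\<close> by simp
        moreover have "(A - B) \<inter> F \<subseteq> A - B" by blast
        moreover have "finite (A - B)" using fA by simp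
        ultimately have "(A - B) \<inter> F = A - B" using card_seteq by blast
        then have ABF: "A - B \<subseteq> F" by blast
        have "card (B \<inter> F) = card (A \<inter> F)"
          using c1 c2 \<open>card (B - A) = card (A - B)\<close> \<open>(A - B) \<inter> F = A - B\<close> by simp
        then have "sum \<rho> B \<le> sum \<rho> A" using le2 by auto
        then obtain u w where u: "u \<in> B - A" and w: "w \<in> A - B" and uw: "\<rho> u < \<rho> w"
          using sum_swap_lemma[OF fA fB cAB ne injAB] by blast
        have uF: "u \<in> F" using u BAF by auto
        have wF: "w \<in> F" using w ABF by auto
        have wm: "w \<noteq> m" using w mB' by auto
        obtain x where x: "x \<in> A" "x \<notin> F" using nonface_out[OF AV(2) Fc_face[OF mV(1)]] F_def by blast
        have out: "\<exists>y\<in>insert u (A - {w}). y \<notin> F" using x wF by auto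
        have CF: "insert u (A - {w}) \<inter> F = insert u ((A \<inter> F) - {w})" using uF by auto
        have cc: "card (insert u ((A \<inter> F) - {w})) = card (A \<inter> F)"
        proof -
          have "card (A \<inter> F) > 0" using fAF w wF card_gt_0_iff by blast
          moreover have "u \<notin> (A \<inter> F) - {w}" using u by auto
          ultimately show ?thesis using fAF w wF by (simp add: card_Diff_singleton)
        qed
        have "sum \<rho> (insert u (A - {w})) < sum \<rho> A" using sum_swap fA w u uw by auto
        then have kl: "(card (insert u (A - {w}) \<inter> F), sum \<rho> (insert u (A - {w}))) < (card (A \<inter> F), sum \<rho> A)"
          using CF cc by simp
        have wA: "w \<in> A" using w by blast
        show ?thesis using gen[OF u wA wm out kl] .
      qed
    qed
  qed
qed

lemma order_exists:
  "\<exists>As. distinct As \<and> set As = Nf \<and> (\<forall>i<length As. \<forall>j<i. \<exists>k<i. \<exists>v. As!k - As!i = {v} \<and> v \<in> As!j)"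
proof -
  have "Nf \<subseteq> Pow V" by (auto simp: Nf_def)
  then have "finite Nf" using finV finite_subset by (metis finite_Pow_iff)
  then show ?thesis
    using sort_order_lemma[of Nf key "\<lambda>A B C. \<exists>v. C - A = {v} \<and> v \<in> B"] exchange by blast
qed

end



lemma set_take_Suc_iff:
  "x \<in> set (take (Suc j) xs) \<longleftrightarrow> (\<exists>i\<le>j. i < length xs \<and> x = xs ! i)"
proof
  assume "x \<in> set (take (Suc j) xs)"
  then obtain i where "i < length (take (Suc j) xs)" "x = take (Suc j) xs ! i" by (metis in_set_conv_nth)
  then have "i \<le> j" "i < length xs" "x = xs ! i" by auto
  then show "\<exists>i\<le>j. i < length xs \<and> x = xs ! i" by blast
next
  assume "\<exists>i\<le>j. i < length xs \<and> x = xs ! i"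
  then obtain i where "i \<le> j" "i < length xs" "x = xs ! i" by blast
  then have "i < length (take (Suc j) xs)" "x = take (Suc j) xs ! i" by auto
  then show "x \<in> set (take (Suc j) xs)" by (metis nth_mem)
qed

lemma gen_facets:
  assumes "S \<subseteq> facets \<Delta>"
  shows "facets (generated_complex S) = S"
proof
  show "facets (generated_complex S) \<subseteq> S"
  proof
    fix G assume G: "G \<in> facets (generated_complex S)"
    then obtain F where F: "F \<in> S" "G \<subseteq> F" by (auto simp: facets_def generated_complex_def)
    have "F \<in> generated_complex S" using F by (auto simp: generated_complex_def)
    then have "F = G" using G F by (auto simp: facets_def)
    then show "G \<in> S" using F by simp
  qed
  show "S \<subseteq> facets (generated_complex S)"
  proof
    fix F assume F: "F \<in> S"
    have "G = F" if G1: "G \<in> generated_complex S" and G2: "F \<subseteq> G" for G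
    proof -
      obtain F' where F': "F' \<in> S" "G \<subseteq> F'" using G1 by (auto simp: generated_complex_def)
      have "F' \<in> facets \<Delta>" "F \<in> facets \<Delta>" using F F' assms by auto
      then have "F' = F" using \<open>F \<subseteq> G\<close> F' by (auto simp: facets_def)
      then show "G = F" using G2 F' by auto
    qed
    moreover have "F \<in> generated_complex S" using F by (auto simp: generated_complex_def)
    ultimately show "F \<in> facets (generated_complex S)" by (auto simp: facets_def)
  qed
qed

lemma qt_pe:
  assumes qt: "quasi_tree n \<Delta>" and ne: "\<Delta> \<noteq> {}"
  shows "\<exists>\<rho> Fc. pe_setup {1..n} \<Delta> \<rho> Fc"
proof -
  have sc: "\<Delta> \<subseteq> Pow {1..n}" "\<And>i. i \<in> {1..n} \<Longrightarrow> {i} \<in> \<Delta>" "\<And>F G. F \<in> \<Delta> \<Longrightarrow> G \<subseteq> F \<Longrightarrow> G \<in> \<Delta>"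
    using qt by (auto simp: quasi_tree_def simplicial_complex_def)
  obtain Fs where Fs: "distinct Fs" "set Fs = facets \<Delta>"
    and leaf: "\<And>i. i < length Fs \<Longrightarrow> is_leaf (generated_complex (set (take (Suc i) Fs))) (Fs ! i)"
    using qt by (auto simp: quasi_tree_def)
  have finD: "finite \<Delta>" using sc(1) finite_subset by (metis finite_Pow_iff finite_atLeastAtMost)
  have emp: "{} \<in> \<Delta>" using ne sc(3) by blast
  have in_facet: "\<exists>i<length Fs. C \<subseteq> Fs ! i" if CD: "C \<in> \<Delta>" for C
  proof -
    obtain M where M: "M \<in> \<Delta>" "C \<subseteq> M" "\<forall>b\<in>\<Delta>. M \<subseteq> b \<longrightarrow> M = b"
      using finite_has_maximal2[OF finD CD] by blast
    then have "M \<in> facets \<Delta>" by (auto simp: facets_def)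
    then obtain i where "i < length Fs" "Fs ! i = M" using Fs(2) by (metis in_set_conv_nth)
    then show ?thesis using M by blast
  qed
  have Fs_face: "Fs ! i \<in> \<Delta>" if "i < length Fs" for i
    using Fs(2) that nth_mem[OF that] by (auto simp: facets_def)
  define st where "st v = (LEAST i. i < length Fs \<and> v \<in> Fs ! i)" for v
  have st: "st v < length Fs \<and> v \<in> Fs ! (st v)" if vn: "v \<in> {1..n}" for v
  proof -
    obtain i where "i < length Fs" "{v} \<subseteq> Fs ! i" using in_facet[OF sc(2)[OF vn]] by blast
    then have "\<exists>i. i < length Fs \<and> v \<in> Fs ! i" by blast
    then show ?thesis unfolding st_def by (rule LeastI_ex)
  qed
  have st_le: "st v \<le> i" if "i < length Fs" "v \<in> Fs ! i" for v i
    unfolding st_def using that by (simp add: Least_le)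
  define \<rho> where "\<rho> v = st v * (n + 1) + v" for v
  have inj: "inj_on \<rho> {1..n}"
  proof (rule inj_onI)
    fix x y assume xy: "x \<in> {1..n}" "y \<in> {1..n}" "\<rho> x = \<rho> y"
    have md: "(k * (n + 1) + v) mod (n + 1) = v" if "v \<le> n" for k v
    proof -
      have "(v + k * (n + 1)) mod (n + 1) = v mod (n + 1)" by (rule mod_mult_self1)
      then show ?thesis using that by (simp add: add.commute)
    qed
    have "\<rho> x mod (n + 1) = x" "\<rho> y mod (n + 1) = y" unfolding \<rho>_def using md xy by auto
    then show "x = y" using xy by simp
  qed
  have rho_st: "st x \<le> st u" if "x \<in> {1..n}" "u \<in> {1..n}" "\<rho> x \<le> \<rho> u" for x u
  proof (rule ccontr)
    assume "\<not> st x \<le> st u"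
    then have "st u + 1 \<le> st x" by simp
    then have "(st u + 1) * (n + 1) \<le> st x * (n + 1)" by (rule mult_right_mono) simp
    then show False using that by (auto simp: \<rho>_def)
  qed
  define Fc where "Fc u = Fs ! (st u)" for u
  have claim: "\<forall>C. C \<subseteq> Fs ! j \<longrightarrow> u \<in> C \<longrightarrow> (\<forall>x\<in>C. x \<in> {1..n} \<and> st x \<le> st u) \<longrightarrow> C \<subseteq> Fs ! (st u)"
    if "j < length Fs" "u \<in> {1..n}" for j u
    using that(1)
  proof (induction j rule: less_induct)
    case (less j)
    show ?case
    proof (intro allI impI)
      fix C assume C: "C \<subseteq> Fs ! j" "u \<in> C" "\<forall>x\<in>C. x \<in> {1..n} \<and> st x \<le> st u"
      show "C \<subseteq> Fs ! (st u)"
      proof (cases "j \<le> st u")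
        case True
        have "st u \<le> j" using st_le[OF less.prems] C by blast
        then show ?thesis using True C by simp
      next
        case False
        define S where "S = set (take (Suc j) Fs)"
        have Ssub: "S \<subseteq> facets \<Delta>" using Fs(2) set_take_subset unfolding S_def by metis
        have fS: "facets (generated_complex S) = S" using gen_facets[OF Ssub] .
        have L: "is_leaf (generated_complex S) (Fs ! j)" using leaf[OF less.prems] by (simp add: S_def)
        have inS: "Fs ! i \<in> S" if "i \<le> j" for i using that less.prems by (auto simp: S_def set_take_Suc_iff)
        have j0: "0 < j" using False by simp
        have neq: "Fs ! i \<noteq> Fs ! j" if "i < j" for i
          using Fs(1) that less.prems by (simp add: nth_eq_iff_index_eq)
        have "S \<noteq> {Fs ! j}" using inS[of 0] neq[OF j0] by auto
        then obtain G where G: "G \<in> S" "G \<noteq> Fs ! j" "\<forall>H\<in>S. H \<noteq> Fs ! j \<longrightarrow> H \<inter> Fs ! j \<subseteq> G \<inter> Fs ! j"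
          using L unfolding is_leaf_def fS by blast
        obtain k where k: "k \<le> j" "k < length Fs" "G = Fs ! k" using G(1) by (auto simp: S_def set_take_Suc_iff)
        have kj: "k < j" using k G(2) by (cases "k = j") auto
        have CG: "C \<subseteq> Fs ! k"
        proof
          fix x assume x: "x \<in> C"
          have sx: "st x < length Fs" "x \<in> Fs ! (st x)" using st C(3) x by auto
          have "st x < j" using C(3) x False by auto
          then have "Fs ! (st x) \<in> S" "Fs ! (st x) \<noteq> Fs ! j" using inS neq by auto
          then have "x \<in> G" using G(3) sx(2) x C(1) by blast
          then show "x \<in> Fs ! k" using k by simp
        qed
        show ?thesis using less.IH[OF kj k(2)] CG C by blast
      qed
    qed
  qed
  have "pe_setup {1..n} \<Delta> \<rho> Fc"
  proof
    show "finite {1..n}" by simp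
    show "\<And>F G. F \<in> \<Delta> \<Longrightarrow> G \<subseteq> F \<Longrightarrow> G \<in> \<Delta>" using sc(3) by blast
    show "{} \<in> \<Delta>" by (rule emp)
    show "\<And>i. i \<in> {1..n} \<Longrightarrow> {i} \<in> \<Delta>" by (rule sc(2))
    show "inj_on \<rho> {1..n}" by (rule inj)
    show "\<And>u. u \<in> {1..n} \<Longrightarrow> Fc u \<in> \<Delta>" using st Fs_face by (simp add: Fc_def)
    fix u C assume u: "u \<in> {1..n}" and C: "C \<in> \<Delta>" "u \<in> C" "C \<subseteq> {1..n}" "\<forall>x\<in>C. \<rho> x \<le> \<rho> u"
    obtain j where j: "j < length Fs" "C \<subseteq> Fs ! j" using in_facet[OF C(1)] by blast
    have "\<forall>x\<in>C. x \<in> {1..n} \<and> st x \<le> st u" using C rho_st u by blast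
    then show "C \<subseteq> Fc u" using claim[OF j(1) u] j(2) C(2) by (simp add: Fc_def)
  qed
  then show ?thesis by blast
qed

theorem theorem4p1:
  fixes n d l :: nat and \<Delta> :: "nat set set"
  assumes "quasi_tree n \<Delta>"
    and "\<exists>F\<in>\<Delta>. card F = d" and "\<forall>F\<in>\<Delta>. card F \<le> d"
    and "l < d"
  shows "has_linear_quotients n
           (ideal_gen n {(monom_of_set F :: 'k::field mpoly) | F.
              F \<subseteq> {1..n} \<and> card F = l + 1 \<and> F \<notin> \<Delta>})"
proof -
  have ne: "\<Delta> \<noteq> {}" using assms(2) by blast
  obtain \<rho> Fc where pe: "pe_setup {1..n} \<Delta> \<rho> Fc" using qt_pe[OF assms(1) ne] by blast
  define N where "N = pe_setup.Nf {1..n} \<Delta> (l + 1)"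
  have N_def': "N = {A. A \<subseteq> {1..n} \<and> card A = l + 1 \<and> A \<notin> \<Delta>}"
    unfolding N_def pe_setup.Nf_def[OF pe] by simp
  obtain As where As: "distinct As" "set As = N"
    and ord: "\<forall>i<length As. \<forall>j<i. \<exists>k<i. \<exists>v. As!k - As!i = {v} \<and> v \<in> As!j"
    using pe_setup.order_exists[OF pe, of "l + 1"] unfolding N_def by blast
  have Nsub: "\<forall>A\<in>N. A \<subseteq> {1..n} \<and> card A = l + 1" by (simp add: N_def')
  have finN: "\<And>A. A \<in> N \<Longrightarrow> finite A" using Nsub finite_subset by blast
  have gens: "{(monom_of_set F :: 'k::field mpoly) | F. F \<subseteq> {1..n} \<and> card F = l + 1 \<and> F \<notin> \<Delta>} = mon ` sq ` N"
  proof -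
    have "{(monom_of_set F :: 'k::field mpoly) | F. F \<subseteq> {1..n} \<and> card F = l + 1 \<and> F \<notin> \<Delta>} = (\<lambda>F. monom_of_set F) ` N"
      by (auto simp: N_def')
    also have "\<dots> = mon ` sq ` N" using finN by (auto simp: monom_of_set_eq image_iff)
    finally show ?thesis .
  qed
  define fs where "fs = map (\<lambda>A. (mon (sq A) :: 'k mpoly)) As"
  have injN: "inj_on (\<lambda>A. (mon (sq A) :: 'k mpoly)) N"
  proof (rule inj_onI)
    fix A B assume "A \<in> N" "B \<in> N" "(mon (sq A) :: 'k mpoly) = mon (sq B)"
    then have "sq A = sq B" "finite A" "finite B" using mon_inj finN by auto
    then show "A = B" using keys_sq by metis
  qed
  have d: "distinct fs" unfolding fs_def using As injN by (simp add: distinct_map)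
  have s: "set fs = min_monomial_gens n (ideal_gen n (mon ` sq ` N) :: 'k mpoly set)"
    unfolding min_gens_lemma[OF Nsub] fs_def using As by auto
  have lin: "generated_by_variables n (colon n (ideal_gen n (set (take i fs))) (fs ! i))"
    if i: "0 < i" "i < length fs" for i
  proof -
    have iA: "i < length As" using i by (simp add: fs_def)
    define A where "A = As ! i"
    have AN: "A \<in> N" using nth_mem[OF iA] As(2) by (simp add: A_def)
    have fA: "finite A" using finN AN by blast
    have tk0: "take i fs = map (\<lambda>A. (mon (sq A) :: 'k mpoly)) (take i As)" unfolding fs_def by (rule take_map)
    have tk: "set (take i fs) = mon ` sq ` set (take i As)" by (simp only: tk0 set_map image_image)
    have fi: "fs ! i = mon (sq A)" unfolding fs_def A_def using iA by (rule nth_map)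
    have inT: "B \<in> set (take i As) \<longleftrightarrow> (\<exists>j<i. B = As ! j)" for B
    proof
      assume "B \<in> set (take i As)"
      then obtain j where "j < length (take i As)" "B = take i As ! j" by (metis in_set_conv_nth)
      then have "j < i" "B = As ! j" by auto
      then show "\<exists>j<i. B = As ! j" by blast
    next
      assume "\<exists>j<i. B = As ! j"
      then obtain j where "j < i" "B = As ! j" by blast
      then have "j < length (take i As)" "B = take i As ! j" using iA by auto
      then show "B \<in> set (take i As)" by (metis nth_mem)
    qed
    define V where "V = {v. \<exists>k<i. As ! k - A = {v}}"
    have setN: "As ! k \<in> N" if kk: "k < length As" for k
    proof -
      have "As ! k \<in> set As" using kk by (rule nth_mem)
      then show ?thesis unfolding As(2) .
    qed
    have G: "\<forall>g\<in>sq ` set (take i As). Poly_Mapping.keys g \<subseteq> {1..n}"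
    proof
      fix g assume "g \<in> sq ` set (take i As)"
      then obtain B where B: "B \<in> set (take i As)" "g = sq B" by blast
      then have "B \<in> set As" using in_set_takeD by fast
      then have "B \<in> N" unfolding As(2) .
      then have "finite B" "B \<subseteq> {1..n}" using finN Nsub by auto
      then show "Poly_Mapping.keys g \<subseteq> {1..n}" using B(2) keys_sq by simp
    qed
    have a: "Poly_Mapping.keys (sq A) \<subseteq> {1..n}" using AN Nsub fA keys_sq by auto
    have VV: "V \<subseteq> {1..n}"
    proof
      fix v assume "v \<in> V"
      then obtain k where k: "k < i" "As ! k - A = {v}" unfolding V_def by blast
      have "k < length As" using k(1) iA by simp
      then have "As ! k \<in> N" by (rule setN)
      moreover have "v \<in> As ! k" using k(2) by blast
      ultimately show "v \<in> {1..n}" using Nsub by blast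
    qed
    have H: "(\<exists>g\<in>sq ` set (take i As). dvdm g (m + sq A)) \<longleftrightarrow> (\<exists>v\<in>V. 1 \<le> Poly_Mapping.lookup m v)" for m
    proof
      assume "\<exists>g\<in>sq ` set (take i As). dvdm g (m + sq A)"
      then obtain B where B: "B \<in> set (take i As)" "dvdm (sq B) (m + sq A)" by blast
      obtain j where j0: "j < i" "B = As ! j" using inT[THEN iffD1, OF B(1)] by blast
      have j: "j < i" "dvdm (sq (As ! j)) (m + sq A)" using j0 B(2) by simp_all
      have fB: "finite (As ! j)" using j iA setN finN by auto
      obtain k v where kv: "k < i" "As ! k - As ! i = {v}" "v \<in> As ! j" using ord[rule_format, OF iA j(1)] by blast
      have "1 \<le> Poly_Mapping.lookup (m + sq A) v" using j(2) kv(3) fB by (simp add: dvdm_sq)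
      moreover have "v \<notin> A" using kv(2) by (auto simp: A_def)
      ultimately have "1 \<le> Poly_Mapping.lookup m v" using fA by (simp add: lookup_add lookup_sq)
      moreover have "v \<in> V" using kv by (auto simp: V_def A_def)
      ultimately show "\<exists>v\<in>V. 1 \<le> Poly_Mapping.lookup m v" by blast
    next
      assume "\<exists>v\<in>V. 1 \<le> Poly_Mapping.lookup m v"
      then obtain v k where vk: "k < i" "As ! k - A = {v}" "1 \<le> Poly_Mapping.lookup m v" by (auto simp: V_def)
      have fB: "finite (As ! k)" using vk iA setN finN by auto
      have "dvdm (sq (As ! k)) (m + sq A)"
      proof -
        have "1 \<le> Poly_Mapping.lookup (m + sq A) x" if "x \<in> As ! k" for x
        proof (cases "x \<in> A")
          case True then show ?thesis using fA by (simp add: lookup_add lookup_sq)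
        next
          case False then have "x = v" using that vk(2) by auto
          then show ?thesis using vk(3) by (simp add: lookup_add)
        qed
        then show ?thesis using fB by (simp add: dvdm_sq)
      qed
      moreover have "As ! k \<in> set (take i As)" using inT vk(1) by blast
      ultimately show "\<exists>g\<in>sq ` set (take i As). dvdm g (m + sq A)" by blast
    qed
    have C: "colon n (ideal_gen n (set (take i fs))) (fs ! i) = ideal_gen n (var ` V)"
      unfolding tk fi by (rule colon_lemma[OF G a VV H])
    show ?thesis unfolding generated_by_variables_def
      by (rule exI[where x=V]) (rule conjI[OF VV C])
  qed
  have lin': "\<forall>i. 0 < i \<and> i < length fs \<longrightarrow>
           generated_by_variables n (colon n (ideal_gen n (set (take i fs))) (fs ! i))"
    using lin by blast
  show ?thesis
    unfolding gens has_linear_quotients_def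
    by (rule exI[where x=fs]) (rule conjI[OF d conjI[OF s lin']])
qed

end
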